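(* Fix $\varepsilon\in\{1,-1\}$ and $m\in\mathbb{R}$. Let $I\subset\mathbb{R}$ be an open interval, $A:I\to\mathrm{SL}(2,\mathbb{C})$ and $h:I\to\mathbb{R}$ smooth maps, and let $y:I\to Y$, $y(s)=(A(s);h(s),h'(s),h''(s))$. Then $y$ is an integral curve of the Euler--Lagrange system $(\mathcal{J},\omega)$ with $y^{\ast}\omega=ds$ if and only if \[ A^{-1}A' = H(h) \quad\text{and}\quad \frac{d}{ds}\,U(h,h',h'') = \left[\,U(h,h',h''),\,H(h)\,\right] \quad\text{on } I . \]
   Context: For $h\in\mathbb{R}$ put $H(h)=\begin{pmatrix}0&\varepsilon\\ 2\varepsilon h+\frac{m}{3}+i&0\end{pmatrix}\in\mathfrak{sl}(2,\mathbb{C})$, and for $(h,h_1,h_2)\in\mathbb{R}^3$ put \[ U(h,h_1,h_2)=\begin{pmatrix} i h_1 & 2i\varepsilon\left(h-\varepsilon\left(\frac{m}{3}+i\right)\right)\\[2pt] 2\left(h+\frac{2\varepsilon m}{3}\right)-i\varepsilon\left(h_2-4h^2+\frac{2\varepsilon m h}{3}+\frac{2m^2}{9}-2\right) & -ih_1\end{pmatrix}. \] The momentum space is $Y=\mathrm{SL}(2,\mathbb{C})\times\mathbb{R}^3$ with coordinates $(A;h,h_1,h_2)$. Write the Maurer--Cartan form of $\mathrm{SL}(2,\mathbb{C})$ (pulled back to $Y$) as $A^{-1}dA=\alpha+i\beta$ with $\alpha=\begin{pmatrix}\alpha^1_1&\alpha^1_2\\ \alpha^2_1&-\alpha^1_1\end{pmatrix}$,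 $\beta=\begin{pmatrix}\beta^1_1&\beta^1_2\\ \beta^2_1&-\beta^1_1\end{pmatrix}$ real-valued. Let $\omega=\beta^2_1$. The Euler--Lagrange system $(\mathcal{J},\omega)$ is the Pfaffian system on $Y$ generated by the 1-forms $\beta^1_1$, $\beta^1_2$, $\alpha^1_1$, $\alpha^1_2-\varepsilon\omega$, $\alpha^2_1-(2\varepsilon h+\frac{m}{3})\omega$, $dh-h_1\omega$, $dh_1-h_2\omega$, $dh_2-12hh_1\omega$, with independence condition $\omega\neq0$. An integral curve is a smooth curve $y$ in $Y$ on which all these generators pull back to zero and $y^\ast\omega$ vanishes nowhere. (These integral curves correspond to extremals of the functional $\int(m+k)\omega$ on null curves in de Sitter 3-space, with $h=\frac{\varepsilon}{2}(k-\frac{m}{3})$.) *)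

theory Defs
  imports "HOL-Analysis.Analysis"
begin

definition mat2 :: "complex \<Rightarrow> complex \<Rightarrow> complex \<Rightarrow> complex \<Rightarrow> complex^2^2" where
  "mat2 a b c d = (\<chi> i j. if i = 1 then (if j = 1 then a else b) else (if j = 1 then c else d))"

definition smooth_on :: "real set \<Rightarrow> (real \<Rightarrow> 'a::real_normed_vector) \<Rightarrow> bool" where
  "smooth_on S f \<longleftrightarrow> (\<exists>D::nat \<Rightarrow> real \<Rightarrow> 'a. D 0 = f \<and>
      (\<forall>n. \<forall>x\<in>S. (D n has_vector_derivative D (Suc n) x) (at x)))"

definition Hmat :: "real \<Rightarrow> real \<Rightarrow> real \<Rightarrow> complex^2^2" where
  "Hmat eps m h = mat2 0 (complex_of_real eps) (complex_of_real (2*eps*h + m/3) + \<i>) 0"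

definition Umat :: "real \<Rightarrow> real \<Rightarrow> real \<Rightarrow> real \<Rightarrow> real \<Rightarrow> complex^2^2" where
  "Umat eps m h h1 h2 = mat2
     (\<i> * complex_of_real h1)
     (2 * \<i> * complex_of_real eps * (complex_of_real h - complex_of_real eps * (complex_of_real (m/3) + \<i>)))
     (complex_of_real (2 * (h + 2*eps*m/3))
        - \<i> * complex_of_real eps * complex_of_real (h2 - 4*h^2 + 2*eps*m*h/3 + 2*m^2/9 - 2))
     (- \<i> * complex_of_real h1)"

text \<open>Points of Y = SL(2,C) x R^3 are (A, h, h1, h2); tangent vectors are (dA, dh, dh1, dh2).
  The Maurer--Cartan form evaluated on a tangent vector at A is A^{-1} dA = alpha + i beta.\<close>
type_synonym Ypt = "(complex^2^2) \<times> real \<times> real \<times> real"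

definition MC :: "Ypt \<Rightarrow> Ypt \<Rightarrow> complex^2^2" where
  "MC p v = matrix_inv (fst p) ** fst v"

definition omega_form :: "Ypt \<Rightarrow> Ypt \<Rightarrow> real" where
  "omega_form p v = Im (MC p v $ 2 $ 1)"

definition EL_generators :: "real \<Rightarrow> real \<Rightarrow> Ypt \<Rightarrow> Ypt \<Rightarrow> real list" where
  "EL_generators eps m p v =
     (case p of (A, h, h1, h2) \<Rightarrow> case v of (dA, dh, dh1, dh2) \<Rightarrow>
      let M = MC p v; w = omega_form p v in
      [Im (M$1$1), Im (M$1$2), Re (M$1$1), Re (M$1$2) - eps * w,
       Re (M$2$1) - (2*eps*h + m/3) * w,
       dh - h1 * w, dh1 - h2 * w, dh2 - 12*h*h1*w])"

definition EL_integral_curve :: "real \<Rightarrow> real \<Rightarrow> real set \<Rightarrow> (real \<Rightarrow> Ypt) \<Rightarrow> bool" where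
  "EL_integral_curve eps m I y \<longleftrightarrow> smooth_on I y \<and>
     (\<forall>s\<in>I. (\<forall>g \<in> set (EL_generators eps m (y s) (vector_derivative y (at s))). g = 0)
        \<and> omega_form (y s) (vector_derivative y (at s)) \<noteq> 0)"

end

theory Submission
  imports Defs
begin

lemma mat2_nth: "mat2 a b c d $ 1 $ 1 = a" "mat2 a b c d $ 1 $ 2 = b"
  "mat2 a b c d $ 2 $ 1 = c" "mat2 a b c d $ 2 $ 2 = d"
  by (simp_all add: mat2_def)

lemma mat2_eta: "(M::complex^2^2) = mat2 (M$1$1) (M$1$2) (M$2$1) (M$2$2)"
  unfolding mat2_def vec_eq_iff by (auto simp: forall_2)

lemma mat2_eq_iff: "mat2 a b c d = mat2 a' b' c' d' \<longleftrightarrow> a = a' \<and> b = b' \<and> c = c' \<and> d = d'"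
  by (metis mat2_nth)

lemma mat2_mult: "mat2 a b c d ** mat2 a' b' c' d' =
   mat2 (a*a' + b*c') (a*b' + b*d') (c*a' + d*c') (c*b' + d*d')"
  unfolding matrix_matrix_mult_def mat2_def vec_eq_iff by (auto simp: forall_2 sum_2)

lemma mat2_diff: "mat2 a b c d - mat2 a' b' c' d' = mat2 (a-a') (b-b') (c-c') (d-d')"
  unfolding mat2_def vec_eq_iff by (auto simp: forall_2)

lemma mat2_one: "mat 1 = mat2 1 0 0 1"
  unfolding mat2_def mat_def vec_eq_iff by (auto simp: forall_2)

lemma det_mat2: "det (mat2 a b c d) = a*d - b*c"
  by (simp add: det_2 mat2_nth)

lemma matrix_inv_mat2:
  fixes a b c d :: complex
  assumes "a*d - b*c = 1"
  shows "matrix_inv (mat2 a b c d) = mat2 d (-b) (-c) a"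
proof -
  have e: "mat2 a b c d ** mat2 d (-b) (-c) a = mat 1 \<and> mat2 d (-b) (-c) a ** mat2 a b c d = mat 1"
    using assms by (simp add: mat2_mult mat2_one mat2_eq_iff algebra_simps)
  have inv: "invertible (mat2 a b c d)" using e unfolding invertible_def by blast
  have "mat2 a b c d ** matrix_inv (mat2 a b c d) = mat 1 \<and> matrix_inv (mat2 a b c d) ** mat2 a b c d = mat 1"
    unfolding matrix_inv_def by (rule someI_ex) (use inv in \<open>simp add: invertible_def\<close>)
  then show ?thesis
    by (metis e matrix_mul_assoc matrix_mul_lid matrix_mul_rid)
qed

lemma bl_mat2: "bounded_linear (\<lambda>(p::complex\<times>complex\<times>complex\<times>complex). case p of (a,b,c,d) \<Rightarrow> mat2 a b c d)"
proof -
  have "linear (\<lambda>(p::complex\<times>complex\<times>complex\<times>complex). case p of (a,b,c,d) \<Rightarrow> mat2 a b c d)"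
    by (rule linearI) (auto simp: mat2_def vec_eq_iff forall_2 split: prod.splits)
  then show ?thesis by (simp add: linear_conv_bounded_linear)
qed

lemma mat2_has_vector_derivative:
  assumes "(a has_vector_derivative a') (at s)" "(b has_vector_derivative b') (at s)"
    "(c has_vector_derivative c') (at s)" "(d has_vector_derivative d') (at s)"
  shows "((\<lambda>t. mat2 (a t) (b t) (c t) (d t)) has_vector_derivative mat2 a' b' c' d') (at s)"
proof -
  have "((\<lambda>t. (a t, b t, c t, d t)) has_vector_derivative (a', b', c', d')) (at s)"
    using assms by (intro has_vector_derivative_Pair)
  from bounded_linear.has_vector_derivative[OF bl_mat2 this] show ?thesis by simp
qed

lemma comp_has_vector_derivative:
  fixes M :: "real \<Rightarrow> complex^2^2"
  assumes "(M has_vector_derivative M') (at s)"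
  shows "((\<lambda>t. M t $ i $ j) has_vector_derivative M' $ i $ j) (at s)"
proof -
  have "bounded_linear (\<lambda>N::complex^2^2. N $ i $ j)"
    by (rule bounded_linear_compose[OF bounded_linear_vec_nth bounded_linear_vec_nth])
  from bounded_linear.has_vector_derivative[OF this assms] show ?thesis .
qed

lemma comm_UH:
  assumes eps: "eps = 1 \<or> eps = -1"
  shows "Umat eps m h h1 h2 ** Hmat eps m h - Hmat eps m h ** Umat eps m h h1 h2 =
    mat2 (\<i> * of_real h2) (2*\<i> * of_real eps * of_real h1)
      (of_real (2*h1) - \<i> * of_real eps * of_real (4*h*h1 + 2*eps*m*h1/3)) (-\<i> * of_real h2)"
  using eps unfolding Umat_def Hmat_def mat2_mult mat2_diff mat2_eq_iff
  by (auto simp: complex_eq_iff algebra_simps power2_eq_square) (simp_all add: field_simps)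

lemma U_deriv:
  assumes "(f has_real_derivative f') (at s)" "(g has_real_derivative g') (at s)"
    "(k has_real_derivative k') (at s)"
  shows "((\<lambda>t. Umat eps m (f t) (g t) (k t)) has_vector_derivative
    mat2 (\<i> * of_real g') (2*\<i> * of_real eps * of_real f')
      (of_real (2*f') - \<i> * of_real eps * of_real (k' - 8*f s*f' + 2*eps*m*f'/3)) (-\<i> * of_real g')) (at s)"
proof -
  have r1: "((\<lambda>t. 2 * (f t + 2*eps*m/3)) has_real_derivative 2*f') (at s)"
    using assms by (auto intro!: derivative_eq_intros)
  have r2: "((\<lambda>t. k t - 4*(f t)^2 + 2*eps*m*f t/3 + 2*m^2/9 - 2) has_real_derivative
      (k' - 8*f s*f' + 2*eps*m*f'/3)) (at s)"
    using assms by (auto intro!: derivative_eq_intros)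
  have c1: "((\<lambda>t. \<i> * complex_of_real (g t)) has_vector_derivative \<i> * of_real g') (at s)"
    using assms by (intro has_vector_derivative_mult_right has_vector_derivative_of_real)
  have c2: "((\<lambda>t. - \<i> * complex_of_real (g t)) has_vector_derivative - \<i> * of_real g') (at s)"
    using assms by (intro has_vector_derivative_mult_right has_vector_derivative_of_real)
  have c3: "((\<lambda>t. 2 * \<i> * complex_of_real eps * (complex_of_real (f t) - complex_of_real eps * (complex_of_real (m/3) + \<i>)))
     has_vector_derivative 2 * \<i> * of_real eps * (of_real f' - 0)) (at s)"
    using assms by (intro has_vector_derivative_mult_right has_vector_derivative_of_real
        has_vector_derivative_diff has_vector_derivative_const)
  have c4: "((\<lambda>t. complex_of_real (2 * (f t + 2*eps*m/3))
        - \<i> * complex_of_real eps * complex_of_real (k t - 4*(f t)^2 + 2*eps*m*f t/3 + 2*m^2/9 - 2))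
     has_vector_derivative (of_real (2*f') - \<i> * of_real eps * of_real (k' - 8*f s*f' + 2*eps*m*f'/3))) (at s)"
    using r1 r2 by (intro has_vector_derivative_mult_right has_vector_derivative_of_real
        has_vector_derivative_diff)
  show ?thesis unfolding Umat_def
    using mat2_has_vector_derivative[OF c1 c3 c4 c2] by simp
qed

lemma pointwise:
  fixes M :: "complex^2^2"
  assumes eps: "eps = 1 \<or> eps = -1"
    and M: "matrix_inv A0 ** A1 = M"
    and tr: "M$1$1 + M$2$2 = 0"
    and Ud: "(Uf has_vector_derivative mat2 (\<i> * of_real h2) (2*\<i> * of_real eps * of_real h1)
      (of_real (2*h1) - \<i> * of_real eps * of_real (h3 - 8*h0*h1 + 2*eps*m*h1/3)) (-\<i> * of_real h2)) (at s)"
  shows "((\<forall>g\<in>set (EL_generators eps m (A0,h0,h1,h2) (A1,h1,h2,h3)). g = 0)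
          \<and> omega_form (A0,h0,h1,h2) (A1,h1,h2,h3) \<noteq> 0 \<and> omega_form (A0,h0,h1,h2) (A1,h1,h2,h3) = 1)
     \<longleftrightarrow> (M = Hmat eps m h0 \<and> (Uf has_vector_derivative
          (Umat eps m h0 h1 h2 ** Hmat eps m h0 - Hmat eps m h0 ** Umat eps m h0 h1 h2)) (at s))"
proof
  assume L: "((\<forall>g\<in>set (EL_generators eps m (A0,h0,h1,h2) (A1,h1,h2,h3)). g = 0)
          \<and> omega_form (A0,h0,h1,h2) (A1,h1,h2,h3) \<noteq> 0 \<and> omega_form (A0,h0,h1,h2) (A1,h1,h2,h3) = 1)"
  then have w: "Im (M$2$1) = 1" and g: "Im (M$1$1) = 0" "Im (M$1$2) = 0" "Re (M$1$1) = 0"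
     "Re (M$1$2) = eps" "Re (M$2$1) = 2*eps*h0 + m/3" "h3 = 12*h0*h1"
    using M by (auto simp: EL_generators_def omega_form_def MC_def Let_def)
  have m11: "M$1$1 = 0" using g by (simp add: complex_eq_iff)
  have m22: "M$2$2 = 0" using tr m11 by simp
  have m12: "M$1$2 = of_real eps" using g by (simp add: complex_eq_iff)
  have m21: "M$2$1 = of_real (2*eps*h0 + m/3) + \<i>" using g w by (simp add: complex_eq_iff)
  have "M = Hmat eps m h0"
    by (subst mat2_eta) (simp add: m11 m22 m12 m21 Hmat_def)
  moreover have "(Uf has_vector_derivative
          (Umat eps m h0 h1 h2 ** Hmat eps m h0 - Hmat eps m h0 ** Umat eps m h0 h1 h2)) (at s)"
    unfolding comm_UH[OF eps] using Ud g(6) by (simp add: algebra_simps)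
  ultimately show "M = Hmat eps m h0 \<and> (Uf has_vector_derivative
          (Umat eps m h0 h1 h2 ** Hmat eps m h0 - Hmat eps m h0 ** Umat eps m h0 h1 h2)) (at s)" ..
next
  assume R: "M = Hmat eps m h0 \<and> (Uf has_vector_derivative
          (Umat eps m h0 h1 h2 ** Hmat eps m h0 - Hmat eps m h0 ** Umat eps m h0 h1 h2)) (at s)"
  then have eq: "mat2 (\<i> * of_real h2) (2*\<i> * of_real eps * of_real h1)
      (of_real (2*h1) - \<i> * of_real eps * of_real (h3 - 8*h0*h1 + 2*eps*m*h1/3)) (-\<i> * of_real h2)
    = mat2 (\<i> * of_real h2) (2*\<i> * of_real eps * of_real h1)
      (of_real (2*h1) - \<i> * of_real eps * of_real (4*h0*h1 + 2*eps*m*h1/3)) (-\<i> * of_real h2)"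
    using vector_derivative_unique_at[OF Ud] comm_UH[OF eps] by metis
  then have "eps * (h3 - 8*h0*h1 + 2*eps*m*h1/3) = eps * (4*h0*h1 + 2*eps*m*h1/3)"
    unfolding mat2_eq_iff by (simp add: complex_eq_iff)
  then have h3: "h3 = 12*h0*h1" using eps by auto
  have MH: "M = Hmat eps m h0" using R by simp
  show "((\<forall>g\<in>set (EL_generators eps m (A0,h0,h1,h2) (A1,h1,h2,h3)). g = 0)
          \<and> omega_form (A0,h0,h1,h2) (A1,h1,h2,h3) \<noteq> 0 \<and> omega_form (A0,h0,h1,h2) (A1,h1,h2,h3) = 1)"
    using M MH h3 by (auto simp: EL_generators_def omega_form_def MC_def Let_def Hmat_def mat2_nth)
qed

lemma trace0:
  fixes A :: "real \<Rightarrow> complex^2^2"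
  assumes I: "open I" "s \<in> I" and det: "\<forall>t\<in>I. det (A t) = 1"
    and dA: "(A has_vector_derivative A') (at s)"
  shows "(matrix_inv (A s) ** A')$1$1 + (matrix_inv (A s) ** A')$2$2 = 0"
proof -
  define a where "a t = A t $ 1 $ 1" for t
  define b where "b t = A t $ 1 $ 2" for t
  define c where "c t = A t $ 2 $ 1" for t
  define d where "d t = A t $ 2 $ 2" for t
  have da: "(a has_vector_derivative A'$1$1) (at s)" unfolding a_def by (rule comp_has_vector_derivative[OF dA])
  have db: "(b has_vector_derivative A'$1$2) (at s)" unfolding b_def by (rule comp_has_vector_derivative[OF dA])
  have dc: "(c has_vector_derivative A'$2$1) (at s)" unfolding c_def by (rule comp_has_vector_derivative[OF dA])
  have dd: "(d has_vector_derivative A'$2$2) (at s)" unfolding d_def by (rule comp_has_vector_derivative[OF dA])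
  have "((\<lambda>t. a t * d t - b t * c t) has_vector_derivative
      (a s * A'$2$2 + A'$1$1 * d s - (b s * A'$2$1 + A'$1$2 * c s))) (at s)"
    by (intro has_vector_derivative_diff has_vector_derivative_mult da db dc dd)
  then have "((\<lambda>t. 1) has_vector_derivative
      (a s * A'$2$2 + A'$1$1 * d s - (b s * A'$2$1 + A'$1$2 * c s))) (at s)"
    by (rule has_vector_derivative_transform_within_open[OF _ I])
      (use det in \<open>auto simp: det_2 a_def b_def c_def d_def\<close>)
  then have z: "a s * A'$2$2 + A'$1$1 * d s - (b s * A'$2$1 + A'$1$2 * c s) = 0"
    using vector_derivative_unique_at has_vector_derivative_const by metis
  have As: "A s = mat2 (a s) (b s) (c s) (d s)" unfolding a_def b_def c_def d_def by (rule mat2_eta)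
  have "a s * d s - b s * c s = 1" using det I by (auto simp: det_2 a_def b_def c_def d_def)
  then have inv: "matrix_inv (A s) = mat2 (d s) (-b s) (-c s) (a s)" using As matrix_inv_mat2 by metis
  show ?thesis
    using z unfolding inv by (subst (1 2) mat2_eta[of A']) (simp add: mat2_mult mat2_nth algebra_simps)
qed

theorem proposition3p3:
  fixes eps m :: real and I :: "real set"
    and A :: "real \<Rightarrow> complex^2^2" and h :: "real \<Rightarrow> real" and y :: "real \<Rightarrow> Ypt"
  assumes eps: "eps = 1 \<or> eps = -1"
    and I: "is_interval I" "open I" "I \<noteq> {}"
    and A_smooth: "smooth_on I A" and A_SL: "\<forall>s\<in>I. det (A s) = 1"
    and h_smooth: "smooth_on I h"
    and y_def: "\<forall>s. y s = (A s, h s, deriv h s, deriv (deriv h) s)"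
  shows "(EL_integral_curve eps m I y \<and>
          (\<forall>s\<in>I. omega_form (y s) (vector_derivative y (at s)) = 1))
     \<longleftrightarrow>
         (\<forall>s\<in>I. matrix_inv (A s) ** vector_derivative A (at s) = Hmat eps m (h s)
            \<and> ((\<lambda>t. Umat eps m (h t) (deriv h t) (deriv (deriv h) t)) has_vector_derivative
                 (Umat eps m (h s) (deriv h s) (deriv (deriv h) s) ** Hmat eps m (h s)
                  - Hmat eps m (h s) ** Umat eps m (h s) (deriv h s) (deriv (deriv h) s))) (at s))"
proof -
  obtain DA where DA0: "DA 0 = A" and DAd: "\<forall>n. \<forall>x\<in>I. (DA n has_vector_derivative DA (Suc n) x) (at x)"
    using A_smooth unfolding smooth_on_def by blast
  obtain Dh where Dh0: "Dh 0 = h" and Dhd: "\<forall>n. \<forall>x\<in>I. (Dh n has_vector_derivative Dh (Suc n) x) (at x)"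
    using h_smooth unfolding smooth_on_def by blast
  have hd: "\<And>n x. x \<in> I \<Longrightarrow> (Dh n has_real_derivative Dh (Suc n) x) (at x)"
    using Dhd has_real_derivative_iff_has_vector_derivative by blast
  have hA: "\<And>x. x \<in> I \<Longrightarrow> (A has_vector_derivative DA 1 x) (at x)"
    using DAd DA0 by (metis One_nat_def)
  have d0: "\<And>x. x \<in> I \<Longrightarrow> (h has_real_derivative Dh 1 x) (at x)"
    using hd[of _ 0] Dh0 by simp
  have e1: "\<And>x. x \<in> I \<Longrightarrow> deriv h x = Dh 1 x"
    using d0 DERIV_imp_deriv by blast
  have d1: "\<And>x. x \<in> I \<Longrightarrow> (deriv h has_real_derivative Dh 2 x) (at x)"
  proof -
    fix x assume x: "x \<in> I"
    show "(deriv h has_real_derivative Dh 2 x) (at x)"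
      by (rule has_field_derivative_transform_within_open[OF _ I(2) x])
        (use hd[OF x, of 1] e1 in \<open>simp_all add: numeral_2_eq_2\<close>)
  qed
  have e2: "\<And>x. x \<in> I \<Longrightarrow> deriv (deriv h) x = Dh 2 x"
    using d1 DERIV_imp_deriv by blast
  have d2: "\<And>x. x \<in> I \<Longrightarrow> (deriv (deriv h) has_real_derivative Dh 3 x) (at x)"
  proof -
    fix x assume x: "x \<in> I"
    show "(deriv (deriv h) has_real_derivative Dh 3 x) (at x)"
      by (rule has_field_derivative_transform_within_open[OF _ I(2) x])
        (use hd[OF x, of 2] e2 in \<open>simp_all add: numeral_3_eq_3 numeral_2_eq_2\<close>)
  qed
  have yfun: "y = (\<lambda>t. (A t, h t, deriv h t, deriv (deriv h) t))" using y_def by auto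
  have dy: "\<And>s. s \<in> I \<Longrightarrow> (y has_vector_derivative (DA 1 s, Dh 1 s, Dh 2 s, Dh 3 s)) (at s)"
    unfolding yfun using hA d0 d1 d2
    by (intro has_vector_derivative_Pair) (auto simp: has_real_derivative_iff_has_vector_derivative)
  have vy: "\<And>s. s \<in> I \<Longrightarrow> vector_derivative y (at s) = (DA 1 s, Dh 1 s, Dh 2 s, Dh 3 s)"
    using dy vector_derivative_at by blast
  have vA: "\<And>s. s \<in> I \<Longrightarrow> vector_derivative A (at s) = DA 1 s"
    using hA vector_derivative_at by blast
  have ys: "\<And>s. s \<in> I \<Longrightarrow> y s = (A s, h s, Dh 1 s, Dh 2 s)"
    using y_def e1 e2 by simp
  have smooth: "smooth_on I y"
    unfolding smooth_on_def
  proof (intro exI[of _ "\<lambda>n. if n = 0 then y else (\<lambda>t. (DA n t, Dh n t, Dh (n+1) t, Dh (n+2) t))"] conjI allI ballI)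
    fix n x assume x: "x \<in> I"
    show "((if n = 0 then y else (\<lambda>t. (DA n t, Dh n t, Dh (n+1) t, Dh (n+2) t))) has_vector_derivative
        (if Suc n = 0 then y else (\<lambda>t. (DA (Suc n) t, Dh (Suc n) t, Dh (Suc n+1) t, Dh (Suc n+2) t))) x) (at x)"
    proof (cases "n = 0")
      case True
      then show ?thesis using dy[OF x] by (simp add: numeral_3_eq_3 numeral_2_eq_2)
    next
      case False
      have "((\<lambda>t. (DA n t, Dh n t, Dh (n+1) t, Dh (n+2) t)) has_vector_derivative
          (DA (Suc n) x, Dh (Suc n) x, Dh (Suc n+1) x, Dh (Suc n+2) x)) (at x)"
        using DAd Dhd x by (intro has_vector_derivative_Pair) auto
      then show ?thesis using False by simp
    qed
  qed simp
  have Ud: "\<And>s. s \<in> I \<Longrightarrow> ((\<lambda>t. Umat eps m (h t) (deriv h t) (deriv (deriv h) t)) has_vector_derivative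
      mat2 (\<i> * of_real (Dh 2 s)) (2*\<i> * of_real eps * of_real (Dh 1 s))
      (of_real (2*Dh 1 s) - \<i> * of_real eps * of_real (Dh 3 s - 8*h s*Dh 1 s + 2*eps*m*Dh 1 s/3))
      (-\<i> * of_real (Dh 2 s))) (at s)"
    using U_deriv d0 d1 d2 by blast
  have pw: "\<And>s. s \<in> I \<Longrightarrow>
     ((\<forall>g\<in>set (EL_generators eps m (y s) (vector_derivative y (at s))). g = 0)
          \<and> omega_form (y s) (vector_derivative y (at s)) \<noteq> 0 \<and> omega_form (y s) (vector_derivative y (at s)) = 1)
     \<longleftrightarrow> (matrix_inv (A s) ** vector_derivative A (at s) = Hmat eps m (h s)
            \<and> ((\<lambda>t. Umat eps m (h t) (deriv h t) (deriv (deriv h) t)) has_vector_derivative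
                 (Umat eps m (h s) (deriv h s) (deriv (deriv h) s) ** Hmat eps m (h s)
                  - Hmat eps m (h s) ** Umat eps m (h s) (deriv h s) (deriv (deriv h) s))) (at s))"
  proof -
    fix s assume s: "s \<in> I"
    show "?thesis s"
      unfolding ys[OF s] vy[OF s] vA[OF s] e1[OF s] e2[OF s]
      by (rule pointwise[OF eps refl trace0[OF I(2) s _ hA[OF s]] Ud[OF s]]) (use A_SL in auto)
  qed
  show ?thesis
    unfolding EL_integral_curve_def using smooth pw by blast
qed

end
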